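(* Let $n\ge2$. Every eigenvalue of every standardized Laplacian matrix of order $n$ belongs to the intersection of: (1) the two closed disks of radius $1-1/n$ centered at $1/n$ and at $1-1/n$; (2) the two closed angles (each of opening less than $\pi$), one with vertex $1$ bounded by the two half-lines from $1$ through $e^{-2\pi\mathrm i/n}$ and through $e^{2\pi\mathrm i/n}$, the other with vertex $0$ bounded by the two half-lines from $0$ through $e^{-(\pi/2-\pi/n)\mathrm i}$ and through $e^{(\pi/2-\pi/n)\mathrm i}$; and (3) the band $|\operatorname{Im}z|\le\frac{1}{2n}\cot\frac{\pi}{2n}$.
   Context: A standardized Laplacian matrix of order $n$ is a real $n\times n$ matrix whose row sums are all $0$ and whose off-diagonal entries are nonpositive with absolute value at most $1/n$. *)

theory Defs
  imports Complex_Main "Jordan_Normal_Form.Char_Poly"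
begin

definition standardized_laplacian :: "nat \<Rightarrow> real mat \<Rightarrow> bool" where
  "standardized_laplacian n A \<longleftrightarrow>
     A \<in> carrier_mat n n \<and>
     (\<forall>i<n. (\<Sum>j<n. A $$ (i, j)) = 0) \<and>
     (\<forall>i<n. \<forall>j<n. i \<noteq> j \<longrightarrow> A $$ (i, j) \<le> 0 \<and> \<bar>A $$ (i, j)\<bar> \<le> 1 / real n)"

text \<open>Closed angle with vertex v bounded by the half-lines from v through a and through b
  (opening less than pi): the convex cone v + s (a - v) + t (b - v), s, t >= 0.\<close>
definition closed_angle :: "complex \<Rightarrow> complex \<Rightarrow> complex \<Rightarrow> complex set" where
  "closed_angle v a b = {v + of_real s * (a - v) + of_real t * (b - v) | s t. s \<ge> 0 \<and> t \<ge> 0}"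

end

theory Submission
  imports Defs
begin


lemma cot_decr:
  fixes s t :: real
  assumes "0 < s" "s < t" "t < pi"
  shows "cot t < cot s"
proof -
  have ss: "sin s > 0" using assms by (intro sin_gt_zero) auto
  have st: "sin t > 0" using assms by (intro sin_gt_zero) auto
  have "sin (t - s) > 0" using assms by (intro sin_gt_zero) auto
  hence "cos s * sin t - sin s * cos t > 0" by (simp add: sin_diff mult.commute)
  hence "cos t * sin s < cos s * sin t" by (simp add: mult.commute)
  hence "cos t / sin t < cos s / sin s" using ss st by (simp add: divide_simps)
  thus ?thesis by (simp add: cot_def)
qed

lemma tangent_ln_sin:
  fixes a c :: real
  assumes a: "0 < a" "a < pi" and c: "0 < c" "c < pi"
  shows "ln (sin a) \<le> ln (sin c) + cot c * (a - c)"
proof -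
  define g where "g t = ln (sin t) - cot c * t" for t
  have D: "DERIV g t :> (cot t - cot c)" if "0 < t" "t < pi" for t
  proof -
    have st: "sin t > 0" using that by (intro sin_gt_zero) auto
    hence "DERIV (\<lambda>t. ln (sin t)) t :> cos t / sin t"
      by (auto intro!: derivative_eq_intros simp: field_simps)
    with st have "DERIV g t :> cos t / sin t - cot c * 1"
      unfolding g_def by (auto intro!: derivative_eq_intros)
    thus ?thesis by (simp add: cot_def)
  qed
  have "g a \<le> g c"
  proof (cases a c rule: linorder_cases)
    case less
    then obtain z where z: "a < z" "z < c" "g c - g a = (c - a) * (cot z - cot c)"
      using MVT2[of a c g "\<lambda>t. cot t - cot c"] D a c by force
    have "cot c < cot z" using z a c by (intro cot_decr) auto
    with z less show ?thesis by (smt (verit) mult_pos_pos)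
  next
    case equal thus ?thesis by simp
  next
    case greater
    then obtain z where z: "c < z" "z < a" "g a - g c = (a - c) * (cot z - cot c)"
      using MVT2[of c a g "\<lambda>t. cot t - cot c"] D a c by force
    have "cot z < cot c" using z a c by (intro cot_decr) auto
    with z greater have "(a - c) * (cot z - cot c) < 0" by (simp add: mult_pos_neg)
    with z show ?thesis by simp
  qed
  thus ?thesis unfolding g_def by (simp add: algebra_simps)
qed


lemma jensen_sin:
  fixes a :: "nat \<Rightarrow> real"
  assumes m: "m > 0" and a: "\<And>k. k < m \<Longrightarrow> 0 < a k \<and> a k < pi"
  shows "(\<Sum>k<m. ln (sin (a k))) \<le> real m * ln (sin ((\<Sum>k<m. a k) / real m))"
proof -
  define c where "c = (\<Sum>k<m. a k) / real m"
  have "(\<Sum>k<m. a k) > (\<Sum>k<m. 0)" using a m by (intro sum_strict_mono) auto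
  hence c0: "c > 0" using m by (simp add: c_def)
  have "(\<Sum>k<m. a k) < (\<Sum>k<m. pi)" using a m by (intro sum_strict_mono) auto
  hence c1: "c < pi" using m by (simp add: c_def field_simps)
  have "(\<Sum>k<m. ln (sin (a k))) \<le> (\<Sum>k<m. ln (sin c) + cot c * (a k - c))"
    using a c0 c1 by (intro sum_mono tangent_ln_sin) auto
  also have "\<dots> = real m * ln (sin c) + cot c * ((\<Sum>k<m. a k) - real m * c)"
    by (simp add: sum.distrib sum_distrib_left sum_subtractf algebra_simps)
  also have "(\<Sum>k<m. a k) - real m * c = 0" using m by (simp add: c_def)
  finally show ?thesis by (simp add: c_def)
qed

lemma prod_cis: "(\<Prod>k<(m::nat). cis (t k)) = cis (\<Sum>k<m. t k)"
  by (induction m) (auto simp: cis_mult)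

lemma cyc_bound:
  fixes w :: "nat \<Rightarrow> complex" and m :: nat and phi :: real
  assumes m: "m \<ge> 1" and im: "\<And>k. k < m \<Longrightarrow> Im (w k) > 0"
    and pr: "(\<Prod>k<m. w k) = 1" and phi: "0 < phi" "phi \<le> pi/2"
    and cond: "\<And>k. k < m \<Longrightarrow> cmod (w k) * sin phi \<le> sin (Arg (w k) + phi)"
  shows "phi \<le> pi/2 - pi / real m"
proof (rule ccontr)
  assume contra: "\<not> phi \<le> pi/2 - pi / real m"
  define th where "th k = Arg (w k)" for k
  have w0: "w k \<noteq> 0" if "k < m" for k using im[OF that] by auto
  have th: "0 < th k \<and> th k < pi" if "k < m" for k
  proof -
    have "sin (th k) > 0" using sin_Arg[OF w0[OF that]] im[OF that] w0[OF that]
      by (simp add: th_def)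
    moreover have "- pi < th k" "th k \<le> pi" using Arg_bounded unfolding th_def by auto
    moreover have "th k > 0"
    proof (rule ccontr)
      assume "\<not> th k > 0"
      hence "sin (- th k) \<ge> 0" using \<open>- pi < th k\<close> by (intro sin_ge_zero) auto
      thus False using \<open>sin (th k) > 0\<close> by simp
    qed
    moreover have "th k \<noteq> pi" using \<open>sin (th k) > 0\<close> by auto
    ultimately show ?thesis by simp
  qed
  have sphi: "sin phi > 0" using phi by (intro sin_gt_zero) auto
  have pos: "sin (th k + phi) > 0" if "k < m" for k
  proof -
    have "cmod (w k) > 0" using w0[OF that] by simp
    hence "cmod (w k) * sin phi > 0" using sphi by simp
    thus ?thesis using cond[OF that] unfolding th_def by linarith
  qed
  have thlt: "th k + phi < pi" if "k < m" for k
  proof (rule ccontr)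
    assume "\<not> th k + phi < pi"
    moreover have "th k + phi < 2 * pi" using th[OF that] phi by simp
    ultimately have "sin (th k + phi) \<le> 0" by (intro sin_le_zero) auto
    thus False using pos[OF that] by simp
  qed
  have wpol: "w k = of_real (cmod (w k)) * cis (th k)" for k
    using rcis_cmod_Arg[of "w k"] by (simp add: rcis_def th_def)
  have nprod: "(\<Prod>k<m. cmod (w k)) = 1"
    using arg_cong[OF pr, of norm] by (simp add: prod_norm)
  have "1 = (\<Prod>k<m. of_real (cmod (w k)) * cis (th k))"
    using pr wpol by (metis (no_types, lifting) prod.cong)
  also have "\<dots> = of_real (\<Prod>k<m. cmod (w k)) * (\<Prod>k<m. cis (th k))"
    by (simp add: prod.distrib)
  also have "\<dots> = cis (\<Sum>k<m. th k)" using nprod by (simp add: prod_cis)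
  finally have "cos (\<Sum>k<m. th k) = 1" by (metis cis.sel(1) one_complex.sel(1))
  then obtain N :: int where N: "(\<Sum>k<m. th k) = real_of_int N * 2 * pi" using cos_one_2pi_int by blast
  have "(\<Sum>k<m. th k) > (\<Sum>k<m. 0)" using th m by (intro sum_strict_mono) (auto simp: lessThan_empty_iff)
  hence "N > 0" using N by (simp add: zero_less_mult_iff)
  hence "(\<Sum>k<m. th k) \<ge> 2 * pi" using N by (simp add: mult_le_cancel_right1[symmetric])
  define a where "a k = th k + phi" for k
  have a: "0 < a k \<and> a k < pi" if "k < m" for k using th[OF that] thlt[OF that] phi
    by (simp add: a_def)
  have sa: "(\<Sum>k<m. a k) = (\<Sum>k<m. th k) + real m * phi" by (simp add: a_def sum.distrib)
  define c where "c = (\<Sum>k<m. a k) / real m"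
  have J: "(\<Sum>k<m. ln (sin (a k))) \<le> real m * ln (sin c)"
    unfolding c_def using m a by (intro jensen_sin) auto
  have "(\<Sum>k<m. ln (sin (a k))) \<ge> (\<Sum>k<m. ln (cmod (w k)) + ln (sin phi))"
  proof (intro sum_mono)
    fix k assume "k \<in> {..<m}"
    hence k: "k < m" by simp
    have "ln (cmod (w k) * sin phi) \<le> ln (sin (a k))"
      using cond[OF k] w0[OF k] sphi pos[OF k] unfolding a_def th_def by (subst ln_le_cancel_iff) auto
    thus "ln (cmod (w k)) + ln (sin phi) \<le> ln (sin (a k))" using w0[OF k] sphi
      by (simp add: ln_mult)
  qed
  also have "(\<Sum>k<m. ln (cmod (w k)) + ln (sin phi)) = ln (\<Prod>k<m. cmod (w k)) + real m * ln (sin phi)"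
  proof -
    have "ln (\<Prod>k<m. cmod (w k)) = (\<Sum>k<m. ln (cmod (w k)))"
      by (rule ln_prod) (use w0 in auto)
    thus ?thesis by (simp add: sum.distrib)
  qed
  finally have "real m * ln (sin phi) \<le> real m * ln (sin c)" using J nprod by simp
  hence le: "ln (sin phi) \<le> ln (sin c)" using m by simp
  have c_lt: "c < pi" and c_gt: "c > pi - phi"
  proof -
    have "(\<Sum>k<m. a k) < (\<Sum>k<m. pi)" using a m by (intro sum_strict_mono) (auto simp: lessThan_empty_iff)
    thus "c < pi" using m by (simp add: c_def field_simps)
    have "pi / real m > pi/2 - phi" using contra by simp
    hence "2 * pi / real m > pi - 2 * phi" by (simp add: field_simps)
    moreover have "(\<Sum>k<m. th k) / real m \<ge> 2 * pi / real m"
      using \<open>(\<Sum>k<m. th k) \<ge> 2 * pi\<close> m by (simp add: divide_right_mono)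
    moreover have "c = (\<Sum>k<m. th k) / real m + phi" using m by (simp add: c_def sa field_simps)
    ultimately show "c > pi - phi" by linarith
  qed
  have "sin c = sin (pi - c)" by simp
  also have "\<dots> < sin phi"
    using c_lt c_gt phi by (intro sin_monotone_2pi) auto
  finally have "sin c < sin phi" .
  moreover have "sin c > 0" using c_lt c_gt phi by (intro sin_gt_zero) auto
  ultimately have "ln (sin c) < ln (sin phi)" by simp
  with le show False by simp
qed


lemma ex_max_idx:
  fixes f :: "nat \<Rightarrow> real"
  assumes "n > 0"
  shows "\<exists>i<n. \<forall>l<n. f l \<le> f i"
proof -
  have "finite (f ` {..<n})" "f ` {..<n} \<noteq> {}" using assms by auto
  hence "Max (f ` {..<n}) \<in> f ` {..<n}" by (rule Max_in)
  then obtain i where i: "i < n" "f i = Max (f ` {..<n})" by auto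
  have "\<forall>l<n. f l \<le> f i" using i by auto
  with i show ?thesis by blast
qed

lemma arg_nonneg_of_im:
  assumes "z \<noteq> 0" "Im z \<ge> 0"
  shows "0 \<le> Arg z"
proof (rule ccontr)
  assume "\<not> 0 \<le> Arg z"
  moreover have "- pi < Arg z" using Arg_bounded by auto
  ultimately have "sin (- Arg z) > 0" by (intro sin_gt_zero) auto
  moreover have "sin (Arg z) = Im z / cmod z" using sin_Arg[OF assms(1)] .
  ultimately have "Im z / cmod z < 0" by simp
  moreover have "Im z / cmod z \<ge> 0" using assms by simp
  ultimately show False by simp
qed

lemma im_cnj_polar:
  assumes "a \<noteq> 0" "b \<noteq> 0"
  shows "Im (cnj a * b) = cmod a * cmod b * sin (Arg b - Arg a)"
proof -
  have a: "a = of_real (cmod a) * cis (Arg a)" using rcis_cmod_Arg[of a] by (simp add: rcis_def)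
  have b: "b = of_real (cmod b) * cis (Arg b)" using rcis_cmod_Arg[of b] by (simp add: rcis_def)
  have "cnj a * b = of_real (cmod a * cmod b) * (cis (- Arg a) * cis (Arg b))"
    by (subst a, subst b) (simp add: cis_cnj)
  also have "cis (- Arg a) * cis (Arg b) = cis (Arg b - Arg a)" by (simp add: cis_mult)
  finally show ?thesis by simp
qed

lemma angular_min:
  fixes d :: "nat \<Rightarrow> complex"
  assumes fin: "finite J" and ne: "J \<noteq> {}" and d0: "\<And>l. l \<in> J \<Longrightarrow> d l \<noteq> 0"
    and u: "u \<noteq> 0" and hp: "\<And>l. l \<in> J \<Longrightarrow> Re (cnj u * d l) \<le> 0"
  shows "\<exists>j\<in>J. \<forall>l\<in>J. Im (cnj (d j) * d l) \<ge> 0"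
proof -
  define e where "e l = - \<i> * cnj u * d l" for l
  have e0: "e l \<noteq> 0" if "l \<in> J" for l using d0[OF that] u by (simp add: e_def)
  have eim: "Im (e l) \<ge> 0" if "l \<in> J" for l using hp[OF that] by (simp add: e_def)
  have "finite ((\<lambda>l. Arg (e l)) ` J)" "(\<lambda>l. Arg (e l)) ` J \<noteq> {}" using fin ne by auto
  hence "Min ((\<lambda>l. Arg (e l)) ` J) \<in> (\<lambda>l. Arg (e l)) ` J" by (rule Min_in)
  then obtain j where j: "j \<in> J" "Arg (e j) = Min ((\<lambda>l. Arg (e l)) ` J)" by auto
  have jmin: "Arg (e j) \<le> Arg (e l)" if "l \<in> J" for l using j fin that by auto
  have "Im (cnj (d j) * d l) \<ge> 0" if l: "l \<in> J" for l
  proof -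
    have "0 \<le> Arg (e j)" by (rule arg_nonneg_of_im[OF e0[OF j(1)] eim[OF j(1)]])
    moreover have "Arg (e l) \<le> pi" using Arg_bounded by auto
    ultimately have "sin (Arg (e l) - Arg (e j)) \<ge> 0" using jmin[OF l] by (intro sin_ge_zero) auto
    hence "Im (cnj (e j) * e l) \<ge> 0" using im_cnj_polar[OF e0[OF j(1)] e0[OF l]] by simp
    moreover have "cnj (e j) * e l = of_real ((cmod u)^2) * (cnj (d j) * d l)"
    proof -
      have "u * cnj u = of_real ((cmod u)^2)" by (simp only: complex_norm_square)
      thus ?thesis by (simp add: e_def mult.commute mult.left_commute)
    qed
    ultimately have "(cmod u)^2 * Im (cnj (d j) * d l) \<ge> 0" by simp
    thus ?thesis using u by (simp add: zero_le_mult_iff)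
  qed
  with j show ?thesis by blast
qed

lemma prod_telescope_div:
  fixes p :: "nat \<Rightarrow> complex"
  assumes "\<And>k. k \<le> m \<Longrightarrow> p k \<noteq> 0"
  shows "(\<Prod>k<m. p (Suc k) / p k) = p m / p 0"
  using assms
proof (induction m)
  case 0 thus ?case by simp
next
  case (Suc m)
  have "(\<Prod>k<Suc m. p (Suc k) / p k) = p m / p 0 * (p (Suc m) / p m)"
    using Suc by simp
  also have "\<dots> = p (Suc m) / p 0" using Suc.prems[of m] by (simp add: field_simps)
  finally show ?case .
qed


lemma cnj_mult_self: "cnj z * z = of_real ((cmod z)^2)"
  by (simp only: complex_norm_square mult.commute)

lemma cnj_mult_self': "cnj z * lam * z = of_real ((cmod z)^2) * lam"
  using cnj_mult_self[of z] by (simp add: mult.commute mult.left_commute)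


lemma im_mult_polar:
  assumes "a \<noteq> 0" "b \<noteq> 0"
  shows "Im (a * b) = cmod a * cmod b * sin (Arg a + Arg b)"
proof -
  have a: "a = of_real (cmod a) * cis (Arg a)" using rcis_cmod_Arg[of a] by (simp add: rcis_def)
  have b: "b = of_real (cmod b) * cis (Arg b)" using rcis_cmod_Arg[of b] by (simp add: rcis_def)
  have "a * b = of_real (cmod a * cmod b) * (cis (Arg a) * cis (Arg b))"
    by (subst a, subst b) simp
  also have "cis (Arg a) * cis (Arg b) = cis (Arg a + Arg b)" by (simp add: cis_mult)
  finally show ?thesis by simp
qed

lemma cond_from_edge:
  fixes p q lam :: complex
  assumes p: "p \<noteq> 0" and q: "q \<noteq> 0" and lam: "lam \<noteq> 0"
    and h: "Im (cnj (q - p) * lam * q) \<le> 0"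
  shows "cmod (q / p) * sin (Arg lam) \<le> sin (Arg (q / p) + Arg lam)"
proof -
  define w where "w = q / p"
  have qw: "q = w * p" using p by (simp add: w_def)
  have w0: "w \<noteq> 0" using p q by (simp add: w_def)
  have "cnj (q - p) * lam * q = (cnj p * p) * ((cnj w * w) * lam - w * lam)"
    by (simp add: qw algebra_simps)
  also have "\<dots> = of_real ((cmod p)^2) * (of_real ((cmod w)^2) * lam - w * lam)"
    by (simp only: cnj_mult_self)
  finally have "Im (cnj (q - p) * lam * q) = (cmod p)^2 * ((cmod w)^2 * Im lam - Im (w * lam))"
    by simp
  with h have "(cmod p)^2 * ((cmod w)^2 * Im lam - Im (w * lam)) \<le> 0" by simp
  hence "(cmod w)^2 * Im lam - Im (w * lam) \<le> 0" using p by (simp add: mult_le_0_iff)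
  moreover have "Im lam = cmod lam * sin (Arg lam)" using sin_Arg[OF lam] lam by simp
  moreover have "Im (w * lam) = cmod w * cmod lam * sin (Arg w + Arg lam)" by (rule im_mult_polar[OF w0 lam])
  ultimately have "cmod w * (cmod w * cmod lam * sin (Arg lam)) \<le> cmod w * (cmod lam * sin (Arg w + Arg lam))"
    by (simp add: power2_eq_square algebra_simps)
  hence "cmod w * cmod lam * sin (Arg lam) \<le> cmod lam * sin (Arg w + Arg lam)"
    using w0 by (simp add: mult.assoc)
  hence "cmod lam * (cmod w * sin (Arg lam)) \<le> cmod lam * sin (Arg w + Arg lam)"
    by (simp add: algebra_simps)
  thus ?thesis using lam by (simp add: w_def)
qed

locale lapeig =
  fixes n :: nat and L :: "nat \<Rightarrow> nat \<Rightarrow> real" and x :: "nat \<Rightarrow> complex" and lam :: complex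
  assumes rows: "\<And>i. i < n \<Longrightarrow> (\<Sum>l<n. L i l) = 0"
    and offd: "\<And>i l. i < n \<Longrightarrow> l < n \<Longrightarrow> i \<noteq> l \<Longrightarrow> L i l \<le> 0"
    and eig: "\<And>i. i < n \<Longrightarrow> (\<Sum>l<n. of_real (L i l) * x l) = lam * x i"
    and nz: "\<exists>i<n. x i \<noteq> 0"
begin

lemma npos: "n > 0" using nz by auto

lemma eig_diff: "i < n \<Longrightarrow> lam * x i = (\<Sum>l<n. of_real (L i l) * (x l - x i))"
proof -
  assume i: "i < n"
  have "(\<Sum>l<n. of_real (L i l) * (x l - x i)) = (\<Sum>l<n. of_real (L i l) * x l) - of_real (\<Sum>l<n. L i l) * x i"
    by (simp add: algebra_simps sum_subtractf sum_distrib_right sum_distrib_left)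
  also have "\<dots> = lam * x i" using i rows eig by simp
  finally show ?thesis by simp
qed

lemma local_max:
  assumes i: "i < n" and mx: "\<And>l. l < n \<Longrightarrow> Re (cnj u * x l) \<le> Re (cnj u * x i)"
  shows "Re (cnj u * lam * x i) \<ge> 0"
proof -
  have "cnj u * lam * x i = cnj u * (lam * x i)" by simp
  also have "\<dots> = (\<Sum>l<n. of_real (L i l) * (cnj u * (x l - x i)))"
    using eig_diff[OF i] by (simp add: sum_distrib_left algebra_simps)
  finally have "Re (cnj u * lam * x i) = (\<Sum>l<n. L i l * Re (cnj u * (x l - x i)))"
    by (simp add: Re_sum)
  also have "\<dots> \<ge> 0"
  proof (intro sum_nonneg)
    fix l assume "l \<in> {..<n}"
    hence l: "l < n" by simp
    show "L i l * Re (cnj u * (x l - x i)) \<ge> 0"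
    proof (cases "l = i")
      case True thus ?thesis by simp
    next
      case False
      have "L i l \<le> 0" using offd[OF i l] False by simp
      moreover have "Re (cnj u * (x l - x i)) \<le> 0" using mx[OF l] by (simp add: algebra_simps)
      ultimately show ?thesis by (simp add: mult_nonpos_nonpos)
    qed
  qed
  finally show ?thesis .
qed

lemma Re_nonneg: "Re lam \<ge> 0"
proof -
  obtain i where i: "i < n" "\<And>l. l < n \<Longrightarrow> cmod (x l) \<le> cmod (x i)"
    using ex_max_idx[OF npos, of "\<lambda>l. cmod (x l)"] by auto
  obtain k where k: "k < n" "x k \<noteq> 0" using nz by auto
  have xi: "x i \<noteq> 0" using i(2)[OF k(1)] k(2) by auto
  have "Re (cnj (x i) * lam * x i) \<ge> 0"
  proof (rule local_max[OF i(1)])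
    fix l assume l: "l < n"
    have "Re (cnj (x i) * x l) \<le> cmod (cnj (x i) * x l)" by (rule complex_Re_le_cmod)
    also have "\<dots> = cmod (x i) * cmod (x l)" by (simp add: norm_mult)
    also have "\<dots> \<le> cmod (x i) * cmod (x i)" using i(2)[OF l] by (simp add: mult_left_mono)
    also have "\<dots> = Re (cnj (x i) * x i)" by (simp add: complex_mult_cnj cmod_def power2_eq_square[symmetric])
    finally show "Re (cnj (x i) * x l) \<le> Re (cnj (x i) * x i)" .
  qed
  moreover have "cnj (x i) * lam * x i = of_real ((cmod (x i))^2) * lam"
    by (rule cnj_mult_self')
  ultimately have "(cmod (x i))^2 * Re lam \<ge> 0" by simp
  thus ?thesis using xi by (simp add: zero_le_mult_iff)
qed


lemma re_rot: "Re (cnj (- \<i> * a) * b) = - Im (cnj a * b)"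
  by (simp add: algebra_simps)

lemma im_self: "Im (cnj a * a) = 0"
  by (simp only: cnj_mult_self Im_complex_of_real)

lemma interior:
  assumes im: "Im lam > 0" and u: "u \<noteq> 0"
  shows "\<exists>l<n. Re (cnj u * x l) > 0"
proof (rule ccontr)
  assume "\<not> (\<exists>l<n. Re (cnj u * x l) > 0)"
  hence hp: "\<And>l. l < n \<Longrightarrow> Re (cnj u * x l) \<le> 0" by force
  define J where "J = {l. l < n \<and> x l \<noteq> 0}"
  have fin: "finite J" unfolding J_def by simp
  have ne: "J \<noteq> {}" using nz unfolding J_def by auto
  have d0: "\<And>l. l \<in> J \<Longrightarrow> x l \<noteq> 0" unfolding J_def by simp
  have hp': "\<And>l. l \<in> J \<Longrightarrow> Re (cnj u * x l) \<le> 0" using hp unfolding J_def by simp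
  have "\<exists>j\<in>J. \<forall>l\<in>J. Im (cnj (x j) * x l) \<ge> 0"
    by (rule angular_min[of J x u]) (use fin ne d0 u hp' in auto)
  then obtain p where p: "p \<in> J" "\<forall>l\<in>J. Im (cnj (x p) * x l) \<ge> 0"
    by (elim bexE)
  have pn: "p < n" and xp: "x p \<noteq> 0" using p(1) unfolding J_def by auto
  have pmax: "Im (cnj (x p) * x l) \<ge> 0" if "l < n" for l
  proof (cases "x l = 0")
    case True thus ?thesis by simp
  next
    case False thus ?thesis using p(2) that unfolding J_def by simp
  qed
  have "Re (cnj (- \<i> * x p) * lam * x p) \<ge> 0"
  proof (rule local_max[OF pn])
    fix l assume "l < n"
    thus "Re (cnj (- \<i> * x p) * x l) \<le> Re (cnj (- \<i> * x p) * x p)"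
      using pmax[of l] unfolding re_rot im_self by simp
  qed
  moreover have "cnj (- \<i> * x p) * lam * x p = \<i> * (of_real ((cmod (x p))^2) * lam)"
  proof -
    have "cnj (- \<i> * x p) * lam * x p = \<i> * (cnj (x p) * lam * x p)" by simp
    thus ?thesis by (simp only: cnj_mult_self')
  qed
  ultimately have "Re (\<i> * (of_real ((cmod (x p))^2) * lam)) \<ge> 0" by metis
  moreover have "Re (\<i> * (of_real ((cmod (x p))^2) * lam)) = - ((cmod (x p))^2 * Im lam)" by simp
  moreover have "(cmod (x p))^2 * Im lam > 0" using im xp by simp
  ultimately show False by linarith
qed

lemma nonconst:
  assumes "lam \<noteq> 0" and i: "i < n"
  shows "\<exists>l<n. x l \<noteq> x i"
proof (rule ccontr)
  assume "\<not> (\<exists>l<n. x l \<noteq> x i)"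
  hence c: "\<And>l. l < n \<Longrightarrow> x l = x i" by auto
  obtain k where k: "k < n" "x k \<noteq> 0" using nz by auto
  have "lam * x k = (\<Sum>l<n. of_real (L k l) * (x l - x k))" by (rule eig_diff[OF k(1)])
  also have "\<dots> = 0" using c k by (intro sum.neutral) auto
  finally show False using k assms by simp
qed

definition Pn where "Pn i j \<longleftrightarrow> j < n \<and> x j \<noteq> x i \<and> (\<forall>l<n. Im (cnj (x j - x i) * (x l - x i)) \<ge> 0)"
definition Vs where "Vs i \<longleftrightarrow> i < n \<and> (\<exists>u. u \<noteq> 0 \<and> (\<forall>l<n. Re (cnj u * x l) \<le> Re (cnj u * x i)))"

lemma succ_ex:
  assumes "lam \<noteq> 0" "Vs i"
  shows "\<exists>j. Pn i j"
proof -
  from assms(2) obtain u where i: "i < n" and u: "u \<noteq> 0" and mx: "\<And>l. l < n \<Longrightarrow> Re (cnj u * x l) \<le> Re (cnj u * x i)"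
    unfolding Vs_def by auto
  let ?J = "{l. l < n \<and> x l \<noteq> x i}"
  have "?J \<noteq> {}" using nonconst[OF assms(1) i] by auto
  moreover have "Re (cnj u * (x l - x i)) \<le> 0" if "l \<in> ?J" for l using mx[of l] that
    by (simp add: algebra_simps)
  ultimately obtain j where j: "j \<in> ?J" "\<And>l. l \<in> ?J \<Longrightarrow> Im (cnj (x j - x i) * (x l - x i)) \<ge> 0"
    using angular_min[of ?J "\<lambda>l. x l - x i" u] u by auto
  have "Im (cnj (x j - x i) * (x l - x i)) \<ge> 0" if "l < n" for l
    using j(2)[of l] that by (cases "x l = x i") auto
  with j(1) show ?thesis unfolding Pn_def by blast
qed

lemma Pn_max:
  assumes "Pn i j" "i < n"
  shows "\<And>l. l < n \<Longrightarrow> Re (cnj (- \<i> * (x j - x i)) * x l) \<le> Re (cnj (- \<i> * (x j - x i)) * x i)"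
    and "\<And>l. l < n \<Longrightarrow> Re (cnj (- \<i> * (x j - x i)) * x l) \<le> Re (cnj (- \<i> * (x j - x i)) * x j)"
proof -
  fix l assume l: "l < n"
  have h: "Im (cnj (x j - x i) * (x l - x i)) \<ge> 0" using assms l unfolding Pn_def by auto
  show "Re (cnj (- \<i> * (x j - x i)) * x l) \<le> Re (cnj (- \<i> * (x j - x i)) * x i)"
    using h by (simp add: algebra_simps)
  have "Im (cnj (x j - x i) * (x j - x i)) = 0" by (simp only: cnj_mult_self Im_complex_of_real)
  thus "Re (cnj (- \<i> * (x j - x i)) * x l) \<le> Re (cnj (- \<i> * (x j - x i)) * x j)"
    using h by (simp add: algebra_simps)
qed

lemma Pn_Vs:
  assumes "Pn i j" "i < n" shows "Vs j"
proof -
  have j: "j < n" and ne: "x j \<noteq> x i" using assms(1) unfolding Pn_def by auto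
  have "- \<i> * (x j - x i) \<noteq> 0" using ne by simp
  with j Pn_max(2)[OF assms] show ?thesis unfolding Vs_def by blast
qed

lemma Pn_edge:
  assumes im: "Im lam > 0" and P: "Pn i j" and i: "i < n"
  shows "Im (cnj (x i) * x j) > 0" and "Im (cnj (x j - x i) * lam * x j) \<le> 0"
proof -
  let ?u = "- \<i> * (x j - x i)"
  have u0: "?u \<noteq> 0" using P unfolding Pn_def by auto
  obtain l where l: "l < n" "Re (cnj ?u * x l) > 0" using interior[OF im u0] by auto
  have "Re (cnj ?u * x i) > 0" using Pn_max(1)[OF P i l(1)] l(2) by linarith
  moreover have "Re (cnj ?u * x i) = Im (cnj (x i) * x j)" by (simp add: algebra_simps)
  ultimately show "Im (cnj (x i) * x j) > 0" by simp
  have j: "j < n" using P unfolding Pn_def by auto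
  have "Re (cnj ?u * lam * x j) \<ge> 0" by (rule local_max[OF j Pn_max(2)[OF P i]])
  moreover have "Re (cnj ?u * lam * x j) = - Im (cnj (x j - x i) * lam * x j)" by (simp add: algebra_simps)
  ultimately show "Im (cnj (x j - x i) * lam * x j) \<le> 0" by simp
qed


lemma Vs_ex: "\<exists>i. Vs i"
proof -
  obtain i where i: "i < n" "\<And>l. l < n \<Longrightarrow> Re (x l) \<le> Re (x i)"
    using ex_max_idx[OF npos, of "\<lambda>l. Re (x l)"] by auto
  have "Vs i" unfolding Vs_def using i by (intro conjI exI[of _ 1]) auto
  thus ?thesis by blast
qed

lemma sector_pos:
  assumes n2: "n \<ge> 2" and im: "Im lam > 0"
  shows "Im lam * sin (pi / n) \<le> cos (pi / n) * Re lam"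
proof -
  have lam0: "lam \<noteq> 0" using im by auto
  define nxt where "nxt i = (SOME j. Pn i j)" for i
  have nxtP: "Pn i (nxt i)" if "Vs i" for i
    unfolding nxt_def using succ_ex[OF lam0 that] by (rule someI_ex)
  have nxtV: "Vs (nxt i)" if "Vs i" for i
    using Pn_Vs[OF nxtP[OF that]] that unfolding Vs_def by blast
  obtain i0 where i0: "Vs i0" using Vs_ex by blast
  define sq where "sq k = (nxt ^^ k) i0" for k
  have sqV: "Vs (sq k)" for k
    by (induction k) (auto simp: sq_def i0 nxtV)
  have sqn: "sq k < n" for k using sqV[of k] unfolding Vs_def by blast
  have sqS: "sq (Suc k) = nxt (sq k)" for k by (simp add: sq_def)
  have "\<not> inj_on sq {..n}"
  proof
    assume "inj_on sq {..n}"
    hence "card (sq ` {..n}) = Suc n" by (simp add: card_image)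
    moreover have "card (sq ` {..n}) \<le> card {..<n}"
      by (rule card_mono) (auto simp: sqn)
    ultimately show False by simp
  qed
  then obtain a0 b0 where ab0: "a0 \<le> n" "b0 \<le> n" "a0 \<noteq> b0" "sq a0 = sq b0"
    unfolding inj_on_def by auto
  obtain a b where ab: "a < b" "b \<le> n" "sq a = sq b"
  proof (cases "a0 < b0")
    case True thus ?thesis using that ab0 by blast
  next
    case False thus ?thesis using that[of b0 a0] ab0 by auto
  qed
  define m where "m = b - a"
  have m1: "m \<ge> 1" and mn: "m \<le> n" using ab by (auto simp: m_def)
  define p where "p k = x (sq (a + k))" for k
  have P: "Pn (sq (a + k)) (sq (a + Suc k))" for k
    using nxtP[OF sqV[of "a + k"]] by (simp add: sqS)
  have edge1: "Im (cnj (p k) * p (Suc k)) > 0" for k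
    using Pn_edge(1)[OF im P[of k] sqn] by (simp add: p_def)
  have edge2: "Im (cnj (p (Suc k) - p k) * lam * p (Suc k)) \<le> 0" for k
    using Pn_edge(2)[OF im P[of k] sqn] by (simp add: p_def)
  have p0: "p k \<noteq> 0" for k using edge1[of k] by auto
  have pm: "p m = p 0" using ab by (simp add: p_def m_def)
  define w where "w k = p (Suc k) / p k" for k
  have wim: "Im (w k) > 0" for k
  proof -
    have "w k = (p (Suc k) * cnj (p k)) / of_real ((cmod (p k))^2)"
      unfolding w_def by (subst complex_div_cnj) simp
    hence "Im (w k) = Im (cnj (p k) * p (Suc k)) / (cmod (p k))^2"
      by (simp add: mult.commute)
    thus ?thesis using edge1[of k] p0[of k] by simp
  qed
  have wpr: "(\<Prod>k<m. w k) = 1"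
    unfolding w_def using prod_telescope_div[of m p] p0 pm p0[of 0] by simp
  have ph: "0 < Arg lam" "Arg lam \<le> pi / 2"
  proof -
    have "sin (Arg lam) > 0" using sin_Arg[OF lam0] im lam0 by simp
    moreover have "cos (Arg lam) \<ge> 0" using cos_Arg[OF lam0] Re_nonneg lam0 by simp
    moreover have "- pi < Arg lam" "Arg lam \<le> pi" using Arg_bounded by auto
    ultimately show "0 < Arg lam"
      by (smt (verit, best) sin_ge_zero sin_minus)
    show "Arg lam \<le> pi / 2"
    proof (rule ccontr)
      assume "\<not> Arg lam \<le> pi / 2"
      hence "cos (pi - Arg lam) > 0" using \<open>Arg lam \<le> pi\<close> by (intro cos_gt_zero_pi) auto
      thus False using \<open>cos (Arg lam) \<ge> 0\<close> by simp
    qed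
  qed
  have cond: "cmod (w k) * sin (Arg lam) \<le> sin (Arg (w k) + Arg lam)" for k
    unfolding w_def by (rule cond_from_edge[OF p0 p0 lam0 edge2])
  have "Arg lam \<le> pi/2 - pi / real m"
    by (rule cyc_bound[OF m1 wim wpr ph cond])
  moreover have "pi / real n \<le> pi / real m" using m1 mn by (simp add: frac_le)
  ultimately have phb: "Arg lam + pi / n \<le> pi / 2" by linarith
  have "pi / real n \<ge> 0" by simp
  hence "cos (Arg lam + pi / n) \<ge> 0"
    using phb ph n2 by (intro cos_ge_zero) linarith+
  hence "sin (Arg lam) * sin (pi / n) \<le> cos (pi / n) * cos (Arg lam)"
    by (simp add: cos_add mult.commute)
  hence "cmod lam * (sin (Arg lam) * sin (pi / n)) \<le> cmod lam * (cos (pi / n) * cos (Arg lam))"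
    by (simp add: mult_left_mono)
  moreover have "Im lam = cmod lam * sin (Arg lam)" using sin_Arg[OF lam0] lam0 by simp
  moreover have "Re lam = cmod lam * cos (Arg lam)" using cos_Arg[OF lam0] lam0 by simp
  ultimately show ?thesis by (simp add: algebra_simps)
qed

end


lemma cis_ratio_cot:
  fixes a :: real
  assumes "sin a \<noteq> 0"
  shows "\<i> * (cis (2*a) + 1) / (cis (2*a) - 1) = of_real (cot a)"
proof -
  have ne: "cis (2*a) - 1 \<noteq> 0"
  proof
    assume "cis (2*a) - 1 = 0"
    hence "Re (cis (2*a)) = 1" by (simp add: complex_eq_iff)
    hence "cos (2*a) = 1" by simp
    hence "(sin a)^2 = 0" by (simp add: cos_double_sin)
    thus False using assms by simp
  qed
  have "\<i> * (cis (2*a) + 1) = of_real (cot a) * (cis (2*a) - 1)"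
  proof -
    have s2: "(sin a)^2 + (cos a)^2 = 1" by simp
    have c: "cis (2*a) = Complex ((cos a)^2 - (sin a)^2) (2 * sin a * cos a)"
      by (simp add: complex_eq_iff cos_double sin_double)
    have "cos a * ((cos a)\<^sup>2 - (sin a)\<^sup>2 - 1) = - sin a * (2 * sin a * cos a)"
    proof -
      have e: "(sin a)^2 = 1 - (cos a)^2" by (rule sin_squared_eq)
      have "- sin a * (2 * sin a * cos a) = - 2 * (sin a)^2 * cos a" by (simp add: power2_eq_square)
      also have "\<dots> = 2 * (cos a)^2 * cos a - 2 * cos a" unfolding e by (simp add: algebra_simps)
      also have "\<dots> = cos a * ((cos a)\<^sup>2 - (sin a)\<^sup>2 - 1)" unfolding e by (simp add: algebra_simps)
      finally show ?thesis by simp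
    qed
    moreover have "(cos a)\<^sup>2 - (sin a)\<^sup>2 + 1 = cos a / sin a * (2 * sin a * cos a)"
    proof -
      have "cos a / sin a * (2 * sin a * cos a) = 2 * (cos a)^2" using assms by (simp add: power2_eq_square)
      thus ?thesis by (simp add: sin_squared_eq)
    qed
    ultimately show ?thesis using assms unfolding c
      by (simp add: complex_eq_iff cot_def field_simps)
  qed
  thus ?thesis using ne by (simp add: field_simps)
qed

definition sgnm :: "nat \<Rightarrow> nat \<Rightarrow> real" where
  "sgnm j l = (if j < l then 1 else if l < j then -1 else 0)"

lemma geo: "(w::complex) \<noteq> 1 \<Longrightarrow> (\<Sum>l<m. w ^ l) = (w ^ m - 1) / (w - 1)"
  by (simp add: geometric_sum)

lemma eigen_sum:
  fixes w :: complex
  assumes w1: "w \<noteq> 1" and wn: "w ^ n = -1" and j: "j < n"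
  shows "(\<Sum>l<n. (- \<i> * of_real (sgnm j l)) * w ^ l) = \<i> * (w + 1) / (w - 1) * w ^ j"
proof -
  have w1': "w - 1 \<noteq> 0" using w1 by simp
  have "(\<Sum>l<n. of_real (sgnm j l) * w ^ l) = (\<Sum>l<n. (if j < l then w ^ l else 0)) - (\<Sum>l<n. (if l < j then w ^ l else 0))"
    by (auto simp: sgnm_def sum_subtractf[symmetric] intro!: sum.cong)
  also have "(\<Sum>l<n. (if j < l then w ^ l else 0)) = (\<Sum>l\<in>{Suc j..<n}. w ^ l)"
    by (simp add: sum.If_cases) (intro sum.cong, auto)
  also have "\<dots> = (\<Sum>l\<in>{0..<n}. w ^ l) - (\<Sum>l\<in>{0..<Suc j}. w ^ l)"
    using j by (subst sum_diff_nat_ivl) auto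
  also have "(\<Sum>l<n. (if l < j then w ^ l else 0)) = (\<Sum>l\<in>{0..<j}. w ^ l)"
    using j by (simp add: sum.If_cases) (intro sum.cong, auto)
  also have "(\<Sum>l\<in>{0..<n}. w ^ l) = (w ^ n - 1) / (w - 1)"
    using geo[OF w1, of n] by (simp add: atLeast0LessThan)
  also have "(\<Sum>l\<in>{0..<Suc j}. w ^ l) = (w ^ Suc j - 1) / (w - 1)"
    using geo[OF w1, of "Suc j"] by (simp add: atLeast0LessThan)
  also have "(\<Sum>l\<in>{0..<j}. w ^ l) = (w ^ j - 1) / (w - 1)"
    using geo[OF w1, of j] by (simp add: atLeast0LessThan)
  also have "(w ^ n - 1) / (w - 1) - (w ^ Suc j - 1) / (w - 1) - (w ^ j - 1) / (w - 1)
      = ((w ^ n - 1) - (w ^ Suc j - 1) - (w ^ j - 1)) / (w - 1)"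
    by (simp add: diff_divide_distrib)
  also have "(w ^ n - 1) - (w ^ Suc j - 1) - (w ^ j - 1) = - (w + 1) * w ^ j"
    using wn by (simp add: algebra_simps)
  finally have "(\<Sum>l<n. of_real (sgnm j l) * w ^ l) = - (w + 1) * w ^ j / (w - 1)" .
  moreover have "(\<Sum>l<n. (- \<i> * of_real (sgnm j l)) * w ^ l) = (- \<i>) * (\<Sum>l<n. of_real (sgnm j l) * w ^ l)"
    by (subst sum_distrib_left) (simp only: mult.assoc)
  ultimately show ?thesis by (simp add: field_simps)
qed

definition om :: "nat \<Rightarrow> nat \<Rightarrow> complex" where
  "om n k = cis ((2 * real k + 1) * pi / real n)"

lemma om_pow: "om n k ^ j = cis (real j * ((2 * real k + 1) * pi / real n))"
  by (simp add: om_def DeMoivre)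

lemma orth:
  assumes j: "j < n" and l: "l < n"
  shows "(\<Sum>k<n. om n k ^ j * cnj (om n k ^ l)) = (if j = l then of_nat n else 0)"
proof -
  define d where "d = real j - real l"
  define c where "c = cis (d * pi / real n)"
  define z where "z = cis (2 * d * pi / real n)"
  have n0: "real n > 0" using j by simp
  have tm: "om n k ^ j * cnj (om n k ^ l) = c * z ^ k" for k
  proof -
    have "om n k ^ j * cnj (om n k ^ l) = cis (real j * ((2 * real k + 1) * pi / real n) - real l * ((2 * real k + 1) * pi / real n))"
      by (simp add: om_pow cis_cnj cis_mult)
    also have "real j * ((2 * real k + 1) * pi / real n) - real l * ((2 * real k + 1) * pi / real n)
        = d * pi / real n + real k * (2 * d * pi / real n)"
      using n0 by (simp add: d_def field_simps)
    also have "cis \<dots> = c * z ^ k" by (simp add: c_def z_def DeMoivre cis_mult)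
    finally show ?thesis .
  qed
  show ?thesis
  proof (cases "j = l")
    case True
    have "om n k ^ j * cnj (om n k ^ j) = 1" for k
      by (simp add: om_pow cis_cnj cis_mult)
    hence "om n k ^ j * cnj (om n k ^ l) = 1" for k using True by simp
    thus ?thesis using True by simp
  next
    case False
    have z1: "z \<noteq> 1"
    proof
      assume "z = 1"
      hence "cos (2 * d * pi / real n) = 1" unfolding z_def by (metis cis.sel(1) one_complex.sel(1))
      then obtain N :: int where N: "2 * d * pi / real n = real_of_int N * 2 * pi" using cos_one_2pi_int by blast
      hence dN: "d = real_of_int N * real n" using n0 by (simp add: field_simps)
      have "d \<noteq> 0" using False by (simp add: d_def)
      hence "N \<noteq> 0" using dN by auto
      hence "\<bar>real_of_int N\<bar> \<ge> 1" by linarith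
      hence "\<bar>d\<bar> \<ge> real n" using dN n0 by (simp add: abs_mult)
      moreover have "\<bar>d\<bar> < real n" using j l by (simp add: d_def)
      ultimately show False by simp
    qed
    have zn: "z ^ n = 1"
    proof -
      have "z ^ n = cis (real n * (2 * d * pi / real n))" by (simp add: z_def DeMoivre)
      also have "real n * (2 * d * pi / real n) = 2 * pi * real_of_int (int j - int l)"
        using n0 by (simp add: d_def field_simps)
      also have "cis \<dots> = 1" by (rule cis_multiple_2pi) simp
      finally show ?thesis .
    qed
    have "(\<Sum>k<n. om n k ^ j * cnj (om n k ^ l)) = c * (\<Sum>k<n. z ^ k)"
      unfolding tm by (simp add: sum_distrib_left)
    also have "(\<Sum>k<n. z ^ k) = 0" using z1 zn by (simp add: geometric_sum)
    finally show ?thesis using False by simp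
  qed
qed

lemma orth':
  assumes j: "j < n" and l: "l < n"
  shows "(\<Sum>k<n. om n k ^ j * cnj (om n k) ^ l) = (if j = l then of_nat n else 0)"
  using orth[OF j l] by simp

lemma cot_om:
  assumes k: "k < n"
  shows "\<i> * (om n k + 1) / (om n k - 1) = of_real (cot ((2 * real k + 1) * pi / (2 * real n)))"
proof -
  define a where "a = (2 * real k + 1) * pi / (2 * real n)"
  have n0: "real n > 0" using k by simp
  have "a > 0" using n0 by (simp add: a_def)
  moreover have "a < pi"
  proof -
    have "2 * real k + 1 < 2 * real n" using k by simp
    hence "(2 * real k + 1) / (2 * real n) < 1" using n0 by simp
    hence "(2 * real k + 1) / (2 * real n) * pi < 1 * pi" by (intro mult_strict_right_mono) auto
    thus ?thesis by (simp add: a_def)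
  qed
  ultimately have "sin a \<noteq> 0" using sin_gt_zero by force
  moreover have "om n k = cis (2 * a)" using n0 by (simp add: om_def a_def)
  ultimately show ?thesis using cis_ratio_cot[of a] by (simp add: a_def)
qed

lemma om_props:
  assumes k: "k < n"
  shows "om n k \<noteq> 1" and "om n k ^ n = -1"
proof -
  have n0: "real n > 0" using k by simp
  have "om n k ^ n = cis ((2 * real k + 1) * pi)" using n0 by (simp add: om_pow)
  also have "(2 * real k + 1) * pi = 2 * pi * real k + pi" by (simp add: algebra_simps)
  also have "cis (2 * pi * real k + pi) = cis (2 * pi * real k) * cis pi" by (simp only: cis_mult)
  also have "\<dots> = -1" by (simp add: cis_multiple_2pi)
  finally show "om n k ^ n = -1" .
  show "om n k \<noteq> 1"
  proof
    assume "om n k = 1"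
    hence "om n k ^ n = 1" by simp
    with \<open>om n k ^ n = -1\<close> show False by simp
  qed
qed

lemma mu_le:
  assumes k: "k < n"
  shows "cot ((2 * real k + 1) * pi / (2 * real n)) \<le> cot (pi / (2 * real n))"
proof (cases "k = 0")
  case True thus ?thesis by simp
next
  case False
  have n0: "real n > 0" using k by simp
  have "pi / (2 * real n) < (2 * real k + 1) * pi / (2 * real n)"
    using False n0 by (intro divide_strict_right_mono) auto
  moreover have "(2 * real k + 1) * pi / (2 * real n) < pi"
  proof -
    have "2 * real k + 1 < 2 * real n" using k by simp
    hence "(2 * real k + 1) / (2 * real n) < 1" using n0 by simp
    hence "(2 * real k + 1) / (2 * real n) * pi < 1 * pi" by (intro mult_strict_right_mono) auto
    thus ?thesis by simp
  qed
  moreover have "0 < pi / (2 * real n)" using n0 by simp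
  ultimately show ?thesis using cot_decr by (meson less_imp_le)
qed

lemma fourier_bound:
  fixes z :: "nat \<Rightarrow> complex"
  assumes n: "n > 0"
  shows "(\<Sum>j<n. \<Sum>l<n. sgnm j l * Im (cnj (z j) * z l)) \<le> cot (pi / (2 * real n)) * (\<Sum>j<n. (cmod (z j))^2)"
proof -
  define c where "c k = (\<Sum>j<n. cnj (om n k ^ j) * z j)" for k
  define mu where "mu k = cot ((2 * real k + 1) * pi / (2 * real n))" for k
  have nz: "(of_nat n :: complex) \<noteq> 0" using n by simp
  have inv: "z j = (\<Sum>k<n. c k * om n k ^ j) / of_nat n" if j: "j < n" for j
  proof -
    have "(\<Sum>k<n. c k * om n k ^ j) = (\<Sum>k<n. \<Sum>l<n. z l * (om n k ^ j * cnj (om n k ^ l)))"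
      unfolding c_def sum_distrib_right by (intro sum.cong refl) (simp add: mult_ac)
    also have "\<dots> = (\<Sum>l<n. z l * (\<Sum>k<n. om n k ^ j * cnj (om n k ^ l)))"
      by (subst sum.swap) (simp add: sum_distrib_left)
    also have "\<dots> = (\<Sum>l<n. (if l = j then z j * of_nat n else 0))"
      by (intro sum.cong refl) (auto simp: orth' j)
    also have "\<dots> = z j * of_nat n" using j by simp
    finally show ?thesis using nz by simp
  qed
  have cc: "(\<Sum>j<n. cnj (z j) * om n k ^ j) = cnj (c k)" for k
    by (simp add: c_def mult.commute)
  have Bz: "(\<Sum>l<n. (- \<i> * of_real (sgnm j l)) * z l) = (\<Sum>k<n. c k * of_real (mu k) * om n k ^ j) / of_nat n"
    if j: "j < n" for j
  proof -
    have "(\<Sum>l<n. (- \<i> * of_real (sgnm j l)) * z l) =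
        (\<Sum>l<n. (- \<i> * of_real (sgnm j l)) * ((\<Sum>k<n. c k * om n k ^ l) / of_nat n))"
      by (intro sum.cong refl) (simp add: inv)
    also have "\<dots> = (\<Sum>k<n. c k * (\<Sum>l<n. (- \<i> * of_real (sgnm j l)) * om n k ^ l)) / of_nat n"
      by (simp add: sum_distrib_left sum_divide_distrib mult.commute mult.left_commute)
        (subst sum.swap, simp)
    also have "\<dots> = (\<Sum>k<n. c k * of_real (mu k) * om n k ^ j) / of_nat n"
    proof -
      have "(\<Sum>l<n. (- \<i> * of_real (sgnm j l)) * om n k ^ l) = of_real (mu k) * om n k ^ j" if k: "k < n" for k
        using eigen_sum[OF om_props[OF k] j] cot_om[OF k] by (simp add: mu_def)
      thus ?thesis by (simp add: mult.assoc)
    qed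
    finally show ?thesis .
  qed
  have H: "(\<Sum>j<n. cnj (z j) * (\<Sum>l<n. (- \<i> * of_real (sgnm j l)) * z l))
      = (\<Sum>k<n. of_real (mu k) * (c k * cnj (c k))) / of_nat n"
  proof -
    have "(\<Sum>j<n. cnj (z j) * (\<Sum>l<n. (- \<i> * of_real (sgnm j l)) * z l))
        = (\<Sum>j<n. cnj (z j) * ((\<Sum>k<n. c k * of_real (mu k) * om n k ^ j) / of_nat n))"
      by (intro sum.cong refl) (subst Bz, auto)
    also have "\<dots> = (\<Sum>k<n. c k * of_real (mu k) * (\<Sum>j<n. cnj (z j) * om n k ^ j)) / of_nat n"
      by (simp add: sum_distrib_left sum_divide_distrib mult.commute mult.left_commute)
        (subst sum.swap, simp)
    also have "\<dots> = (\<Sum>k<n. of_real (mu k) * (c k * cnj (c k))) / of_nat n"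
      by (simp add: cc mult.commute mult.left_commute)
    finally show ?thesis .
  qed
  have N: "(\<Sum>j<n. cnj (z j) * z j) = (\<Sum>k<n. c k * cnj (c k)) / of_nat n"
  proof -
    have "(\<Sum>j<n. cnj (z j) * z j) = (\<Sum>j<n. cnj (z j) * ((\<Sum>k<n. c k * om n k ^ j) / of_nat n))"
      by (intro sum.cong refl) (simp add: inv[symmetric])
    also have "\<dots> = (\<Sum>k<n. c k * (\<Sum>j<n. cnj (z j) * om n k ^ j)) / of_nat n"
      by (simp add: sum_distrib_left sum_divide_distrib mult.commute mult.left_commute)
        (subst sum.swap, simp)
    also have "\<dots> = (\<Sum>k<n. c k * cnj (c k)) / of_nat n" by (simp add: cc)
    finally show ?thesis .
  qed
  have lhs: "(\<Sum>j<n. \<Sum>l<n. sgnm j l * Im (cnj (z j) * z l)) =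
      Re (\<Sum>j<n. cnj (z j) * (\<Sum>l<n. (- \<i> * of_real (sgnm j l)) * z l))"
    by (simp add: Re_sum sum_distrib_left mult.commute mult.left_commute right_diff_distrib)
  have rhs: "(\<Sum>j<n. (cmod (z j))^2) = Re (\<Sum>j<n. cnj (z j) * z j)"
    by (simp add: Re_sum cmod_def power2_eq_square)
  have cr: "c k * cnj (c k) = of_real ((cmod (c k))^2)" for k
    by (simp only: complex_norm_square)
  have "Re (\<Sum>j<n. cnj (z j) * (\<Sum>l<n. (- \<i> * of_real (sgnm j l)) * z l)) =
      (\<Sum>k<n. mu k * (cmod (c k))^2) / real n"
    unfolding H cr by (simp add: Re_sum Re_divide_of_nat)
  also have "\<dots> \<le> (\<Sum>k<n. cot (pi / (2 * real n)) * (cmod (c k))^2) / real n"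
    using n by (intro divide_right_mono sum_mono mult_right_mono) (auto simp: mu_def mu_le)
  also have "\<dots> = cot (pi / (2 * real n)) * ((\<Sum>k<n. (cmod (c k))^2) / real n)"
    by (simp add: sum_distrib_left)
  also have "(\<Sum>k<n. (cmod (c k))^2) / real n = (\<Sum>j<n. (cmod (z j))^2)"
    unfolding rhs N cr by (simp add: Re_sum Re_divide_of_nat)
  finally show ?thesis using lhs by simp
qed


definition flipup :: "complex \<Rightarrow> complex" where
  "flipup a = (if Im a > 0 \<or> (Im a = 0 \<and> Re a \<ge> 0) then a else - a)"

lemma flipup_arg:
  assumes "flipup a \<noteq> 0"
  shows "0 \<le> Arg (flipup a) \<and> Arg (flipup a) < pi"
proof -
  let ?b = "flipup a"
  have h: "Im ?b > 0 \<or> (Im ?b = 0 \<and> Re ?b \<ge> 0)"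
    unfolding flipup_def by auto
  have "0 \<le> Arg ?b" using h assms by (intro arg_nonneg_of_im) auto
  moreover have "Arg ?b \<noteq> pi"
  proof
    assume "Arg ?b = pi"
    hence "cos (Arg ?b) = -1" by simp
    hence "Re ?b / cmod ?b = -1" using cos_Arg[OF assms] by simp
    hence "Re ?b = - cmod ?b" using assms by (simp add: field_simps)
    moreover have "Im ?b = 0"
    proof -
      have "sin (Arg ?b) = 0" using \<open>Arg ?b = pi\<close> by simp
      thus ?thesis using sin_Arg[OF assms] assms by simp
    qed
    ultimately show False using h assms by auto
  qed
  moreover have "Arg ?b \<le> pi" using Arg_bounded by auto
  ultimately show ?thesis by simp
qed

lemma flipup_cases: "flipup a = a \<or> flipup a = - a"
  unfolding flipup_def by auto

lemma flipup_abs_im: "\<bar>Im (cnj (flipup a) * flipup b)\<bar> = \<bar>Im (cnj a * b)\<bar>"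
  using flipup_cases[of a] flipup_cases[of b] by auto

lemma flipup_cmod: "cmod (flipup a) = cmod a"
  using flipup_cases[of a] by auto

lemma ord_im:
  assumes a: "a = 0 \<or> (0 \<le> Arg a \<and> Arg a < pi)" and b: "b = 0 \<or> (0 \<le> Arg b \<and> Arg b < pi)"
    and le: "Arg a \<le> Arg b"
  shows "Im (cnj a * b) \<ge> 0"
proof (cases "a = 0 \<or> b = 0")
  case True thus ?thesis by auto
next
  case False
  hence "sin (Arg b - Arg a) \<ge> 0" using a b le by (intro sin_ge_zero) auto
  thus ?thesis using im_cnj_polar[of a b] False by simp
qed

lemma abs_im_bound:
  fixes x :: "nat \<Rightarrow> complex"
  assumes n: "n > 0"
  shows "(\<Sum>i<n. \<Sum>l<n. \<bar>Im (cnj (x i) * x l)\<bar>) \<le> cot (pi / (2 * real n)) * (\<Sum>i<n. (cmod (x i))^2)"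
proof -
  define y where "y i = flipup (x i)" for i
  have yup: "y i = 0 \<or> (0 \<le> Arg (y i) \<and> Arg (y i) < pi)" for i
    using flipup_arg[of "x i"] unfolding y_def by blast
  define xs where "xs = sort_key (\<lambda>i. Arg (y i)) [0..<n]"
  have len: "length xs = n" by (simp add: xs_def)
  have dist: "distinct xs" by (simp add: xs_def)
  have set: "set xs = {..<n}" by (auto simp: xs_def)
  have srt: "sorted (map (\<lambda>i. Arg (y i)) xs)" by (simp add: xs_def)
  define sg where "sg k = xs ! k" for k
  have bij: "bij_betw sg {..<n} {..<n}"
  proof -
    have "bij_betw ((!) xs) {..<n} {..<n}" by (rule bij_betw_nth[OF dist]) (simp_all add: len set)
    thus ?thesis unfolding sg_def by simp
  qed
  have mono: "Arg (y (sg k)) \<le> Arg (y (sg k'))" if "k \<le> k'" "k' < n" for k k'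
    using srt that len unfolding sg_def by (auto simp: sorted_iff_nth_mono)
  define z where "z k = y (sg k)" for k
  have absz: "\<bar>Im (cnj (z k) * z k')\<bar> = sgnm k k' * Im (cnj (z k) * z k')" if "k < n" "k' < n" for k k'
  proof (cases k k' rule: linorder_cases)
    case less
    have "Im (cnj (z k) * z k') \<ge> 0" unfolding z_def
      using mono[of k k'] less that by (intro ord_im yup) auto
    thus ?thesis using less by (simp add: sgnm_def)
  next
    case equal thus ?thesis by (simp add: sgnm_def)
  next
    case greater
    have "Im (cnj (z k') * z k) \<ge> 0" unfolding z_def
      using mono[of k' k] greater that by (intro ord_im yup) auto
    moreover have "Im (cnj (z k') * z k) = - Im (cnj (z k) * z k')" by simp
    ultimately have v: "Im (cnj (z k) * z k') \<le> 0" by linarith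
    have "sgnm k k' = -1" using greater by (simp add: sgnm_def)
    thus ?thesis using v by (simp only: abs_of_nonpos)
  qed
  have "(\<Sum>i<n. \<Sum>l<n. \<bar>Im (cnj (x i) * x l)\<bar>) = (\<Sum>i<n. \<Sum>l<n. \<bar>Im (cnj (y i) * y l)\<bar>)"
    unfolding y_def by (simp only: flipup_abs_im)
  also have "\<dots> = (\<Sum>k<n. \<Sum>k'<n. \<bar>Im (cnj (z k) * z k')\<bar>)"
  proof -
    have "(\<Sum>i<n. \<Sum>l<n. \<bar>Im (cnj (y i) * y l)\<bar>) = (\<Sum>i<n. \<Sum>k'<n. \<bar>Im (cnj (y i) * y (sg k'))\<bar>)"
      by (rule sum.cong[OF refl]) (rule sum.reindex_bij_betw[OF bij, symmetric])
    also have "\<dots> = (\<Sum>k<n. \<Sum>k'<n. \<bar>Im (cnj (y (sg k)) * y (sg k'))\<bar>)"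
      by (rule sum.reindex_bij_betw[OF bij, symmetric])
    finally show ?thesis unfolding z_def .
  qed
  also have "\<dots> = (\<Sum>k<n. \<Sum>k'<n. sgnm k k' * Im (cnj (z k) * z k'))"
    by (intro sum.cong refl) (simp only: absz lessThan_iff)
  also have "\<dots> \<le> cot (pi / (2 * real n)) * (\<Sum>k<n. (cmod (z k))^2)"
    by (rule fourier_bound[OF n])
  also have "(\<Sum>k<n. (cmod (z k))^2) = (\<Sum>i<n. (cmod (y i))^2)"
    unfolding z_def by (rule sum.reindex_bij_betw[OF bij])
  also have "\<dots> = (\<Sum>i<n. (cmod (x i))^2)" unfolding y_def by (simp only: flipup_cmod)
  finally show ?thesis .
qed


lemma im_ofr: "Im (of_real r * w) = r * Im w" by simp

context lapeig begin

lemma sector: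
  assumes n2: "n \<ge> 2"
  shows "\<bar>Im lam\<bar> * sin (pi / n) \<le> cos (pi / n) * Re lam"
proof -
  have cpos: "cos (pi / n) \<ge> 0"
  proof -
    have "pi / real n \<le> pi / 2" using n2 by (intro divide_left_mono) auto
    moreover have "pi / real n \<ge> 0" by simp
    ultimately show ?thesis by (intro cos_ge_zero) linarith+
  qed
  consider "Im lam > 0" | "Im lam = 0" | "Im lam < 0" by linarith
  thus ?thesis
  proof cases
    case 1 thus ?thesis using sector_pos[OF n2] by simp
  next
    case 2 thus ?thesis using cpos Re_nonneg by simp
  next
    case 3
    interpret c: lapeig n L "\<lambda>l. cnj (x l)" "cnj lam"
    proof
      fix i assume i: "i < n"
      have "(\<Sum>l<n. complex_of_real (L i l) * cnj (x l)) = cnj (\<Sum>l<n. complex_of_real (L i l) * x l)"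
        by simp
      also have "\<dots> = cnj lam * cnj (x i)" using eig[OF i] by simp
      finally show "(\<Sum>l<n. complex_of_real (L i l) * cnj (x l)) = cnj lam * cnj (x i)" .
    qed (use rows offd nz in auto)
    have "Im (cnj lam) * sin (pi / n) \<le> cos (pi / n) * Re (cnj lam)"
      using c.sector_pos[OF n2] 3 by simp
    thus ?thesis using 3 by simp
  qed
qed

lemma band:
  assumes lb: "\<And>i l. i < n \<Longrightarrow> l < n \<Longrightarrow> i \<noteq> l \<Longrightarrow> L i l \<ge> - 1 / real n"
  shows "\<bar>Im lam\<bar> \<le> 1 / (2 * real n) * cot (pi / (2 * real n))"
proof -
  define S where "S = (\<Sum>i<n. (cmod (x i))^2)"
  have Spos: "S > 0"
  proof -
    obtain k where k: "k < n" "x k \<noteq> 0" using nz by auto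
    have "S \<ge> (cmod (x k))^2" unfolding S_def
      using k by (intro member_le_sum) auto
    thus ?thesis using k by (smt (verit) zero_less_norm_iff zero_less_power)
  qed
  define c where "c i l = Im (cnj (x i) * x l)" for i l
  have canti: "c l i = - c i l" for i l by (simp add: c_def)
  define T where "T = (\<Sum>i<n. \<Sum>l<n. L i l * c i l)"
  have "lam * (\<Sum>i<n. cnj (x i) * x i) = (\<Sum>i<n. cnj (x i) * (lam * x i))"
    by (simp add: sum_distrib_left mult_ac)
  also have "\<dots> = (\<Sum>i<n. cnj (x i) * (\<Sum>l<n. of_real (L i l) * x l))"
    by (intro sum.cong refl) (simp add: eig)
  also have "\<dots> = (\<Sum>i<n. \<Sum>l<n. of_real (L i l) * (cnj (x i) * x l))"
    by (simp add: sum_distrib_left mult_ac)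
  finally have "Im (lam * (\<Sum>i<n. cnj (x i) * x i)) = (\<Sum>i<n. \<Sum>l<n. L i l * c i l)"
    unfolding c_def by (simp only: Im_sum im_ofr)
  moreover have eqS: "(\<Sum>i<n. cnj (x i) * x i) = of_real S"
    unfolding S_def by (simp only: cnj_mult_self of_real_sum)
  ultimately have "Im (lam * of_real S) = T" unfolding T_def by simp
  hence ImS: "Im lam * S = T" by simp
  have "T = (\<Sum>l<n. \<Sum>i<n. L i l * c i l)" unfolding T_def by (rule sum.swap)
  also have "\<dots> = (\<Sum>i<n. \<Sum>l<n. - (L l i * c i l))"
    by (intro sum.cong refl) (subst canti, simp)
  also have "\<dots> = - (\<Sum>i<n. \<Sum>l<n. L l i * c i l)" by (simp add: sum_negf)
  finally have Tneg: "T = - (\<Sum>i<n. \<Sum>l<n. L l i * c i l)" .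
  have "2 * T = T + T" by simp
  also have "\<dots> = (\<Sum>i<n. \<Sum>l<n. L i l * c i l) - (\<Sum>i<n. \<Sum>l<n. L l i * c i l)"
    using Tneg T_def by simp
  also have "\<dots> = (\<Sum>i<n. \<Sum>l<n. (L i l - L l i) * c i l)"
    by (simp only: sum_subtractf[symmetric] left_diff_distrib)
  finally have T2: "2 * T = (\<Sum>i<n. \<Sum>l<n. (L i l - L l i) * c i l)" .
  have "\<bar>2 * T\<bar> \<le> (\<Sum>i<n. \<bar>\<Sum>l<n. (L i l - L l i) * c i l\<bar>)"
    unfolding T2 by (rule sum_abs)
  also have "\<dots> \<le> (\<Sum>i<n. \<Sum>l<n. \<bar>(L i l - L l i) * c i l\<bar>)"
    by (intro sum_mono sum_abs)
  also have "\<dots> \<le> (\<Sum>i<n. \<Sum>l<n. 1 / real n * \<bar>c i l\<bar>)"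
  proof (intro sum_mono)
    fix i l assume i: "i \<in> {..<n}" and l: "l \<in> {..<n}"
    show "\<bar>(L i l - L l i) * c i l\<bar> \<le> 1 / real n * \<bar>c i l\<bar>"
    proof (cases "i = l")
      case True thus ?thesis by (simp add: c_def cnj_mult_self)
    next
      case False
      have "\<bar>L i l - L l i\<bar> \<le> 1 / real n"
        using lb[of i l] lb[of l i] offd[of i l] offd[of l i] i l False by auto
      hence "\<bar>L i l - L l i\<bar> * \<bar>c i l\<bar> \<le> 1 / real n * \<bar>c i l\<bar>"
        by (intro mult_right_mono) auto
      thus ?thesis by (simp only: abs_mult)
    qed
  qed
  also have "\<dots> = 1 / real n * (\<Sum>i<n. \<Sum>l<n. \<bar>c i l\<bar>)" by (simp add: sum_distrib_left)
  also have "\<dots> \<le> 1 / real n * (cot (pi / (2 * real n)) * S)"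
    unfolding c_def S_def by (intro mult_left_mono abs_im_bound npos) auto
  finally have "2 * \<bar>T\<bar> \<le> 1 / real n * (cot (pi / (2 * real n)) * S)" by simp
  moreover have "\<bar>T\<bar> = \<bar>Im lam\<bar> * S" by (metis ImS abs_mult abs_of_pos Spos)
  ultimately have "\<bar>Im lam\<bar> * S \<le> (1 / (2 * real n) * cot (pi / (2 * real n))) * S"
    by (simp add: field_simps)
  thus ?thesis using Spos by (meson mult_le_cancel_right_pos)
qed

end


lemma gersh:
  fixes M :: "nat \<Rightarrow> nat \<Rightarrow> real" and y :: "nat \<Rightarrow> complex"
  assumes eig: "\<And>i. i < n \<Longrightarrow> (\<Sum>l<n. of_real (M i l) * y l) = z * y i"
    and nz: "\<exists>i<n. y i \<noteq> 0"
  shows "\<exists>i<n. cmod (z - of_real (M i i)) \<le> (\<Sum>l\<in>{..<n}-{i}. \<bar>M i l\<bar>)"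
proof -
  have npos: "n > 0" using nz by auto
  obtain i where i: "i < n" "\<And>l. l < n \<Longrightarrow> cmod (y l) \<le> cmod (y i)"
    using ex_max_idx[OF npos, of "\<lambda>l. cmod (y l)"] by auto
  obtain k where k: "k < n" "y k \<noteq> 0" using nz by auto
  have yi: "cmod (y i) > 0" using i(2)[OF k(1)] k(2) by auto
  have "(\<Sum>l<n. of_real (M i l) * y l) = of_real (M i i) * y i + (\<Sum>l\<in>{..<n}-{i}. of_real (M i l) * y l)"
    using i(1) by (subst sum.remove[of _ i]) auto
  hence "(z - of_real (M i i)) * y i = (\<Sum>l\<in>{..<n}-{i}. of_real (M i l) * y l)"
    using eig[OF i(1)] by (simp add: algebra_simps)
  hence "cmod (z - of_real (M i i)) * cmod (y i) = cmod (\<Sum>l\<in>{..<n}-{i}. of_real (M i l) * y l)"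
    by (metis norm_mult)
  also have "\<dots> \<le> (\<Sum>l\<in>{..<n}-{i}. cmod (of_real (M i l) * y l))" by (rule norm_sum)
  also have "\<dots> \<le> (\<Sum>l\<in>{..<n}-{i}. \<bar>M i l\<bar> * cmod (y i))"
    using i(2) by (intro sum_mono) (auto simp: norm_mult intro!: mult_left_mono)
  also have "\<dots> = (\<Sum>l\<in>{..<n}-{i}. \<bar>M i l\<bar>) * cmod (y i)" by (simp add: sum_distrib_right)
  finally have "cmod (z - of_real (M i i)) \<le> (\<Sum>l\<in>{..<n}-{i}. \<bar>M i l\<bar>)"
    using yi by (meson mult_le_cancel_right_pos)
  with i(1) show ?thesis by blast
qed

lemma shift_eig:
  fixes L :: "nat \<Rightarrow> nat \<Rightarrow> real" and x :: "nat \<Rightarrow> complex" and a b g :: real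
  assumes rows: "\<And>i. i < n \<Longrightarrow> (\<Sum>l<n. L i l) = 0"
    and eig: "\<And>i. i < n \<Longrightarrow> (\<Sum>l<n. of_real (L i l) * x l) = z * x i"
    and nz: "\<exists>i<n. x i \<noteq> 0" and z0: "z \<noteq> 0"
    and cnd: "of_real b * z \<noteq> of_real (g * real n)"
  shows "\<exists>y. (\<forall>i<n. (\<Sum>l<n. of_real ((if i = l then a else 0) + b * L i l + g) * y l) = (of_real a + of_real b * z) * y i)
           \<and> (\<exists>i<n. y i \<noteq> 0)"
proof -
  define al where "al = of_real g * (\<Sum>l<n. x l) / (of_real b * z - of_real (g * real n))"
  have al_eq: "of_real g * ((\<Sum>l<n. x l) + of_nat n * al) = of_real b * z * al"
    using cnd unfolding al_def by (simp add: field_simps)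
  define y where "y l = x l + al" for l
  have Ly: "(\<Sum>l<n. of_real (L i l) * y l) = z * x i" if i: "i < n" for i
  proof -
    have "(\<Sum>l<n. of_real (L i l) * y l) = (\<Sum>l<n. of_real (L i l) * x l) + of_real (\<Sum>l<n. L i l) * al"
      by (simp add: y_def algebra_simps sum.distrib sum_distrib_right sum_distrib_left)
    thus ?thesis using eig[OF i] rows[OF i] by simp
  qed
  have "(\<Sum>l<n. of_real ((if i = l then a else 0) + b * L i l + g) * y l) = (of_real a + of_real b * z) * y i"
    if i: "i < n" for i
  proof -
    have "(\<Sum>l<n. of_real ((if i = l then a else 0) + b * L i l + g) * y l)
        = (\<Sum>l<n. (if i = l then of_real a * y l else 0)) + of_real b * (\<Sum>l<n. of_real (L i l) * y l) + of_real g * (\<Sum>l<n. y l)"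
    proof -
      have "of_real ((if i = l then a else 0) + b * L i l + g) * y l =
          (if i = l then of_real a * y l else 0) + of_real b * (of_real (L i l) * y l) + of_real g * y l" for l
        by (cases "i = l") (simp_all add: algebra_simps)
      thus ?thesis by (simp only: sum.distrib sum_distrib_left)
    qed
    also have "(\<Sum>l<n. (if i = l then of_real a * y l else 0)) = of_real a * y i" using i by simp
    also have "(\<Sum>l<n. y l) = (\<Sum>l<n. x l) + of_nat n * al" by (simp add: y_def sum.distrib)
    also have "of_real g * \<dots> = of_real b * z * al" by (rule al_eq)
    finally show ?thesis using Ly[OF i] by (simp add: y_def algebra_simps)
  qed
  moreover have "\<exists>i<n. y i \<noteq> 0"
  proof (rule ccontr)
    assume "\<not> (\<exists>i<n. y i \<noteq> 0)"
    hence yz: "\<And>i. i < n \<Longrightarrow> y i = 0" by auto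
    obtain k where k: "k < n" "x k \<noteq> 0" using nz by auto
    have "z * x k = 0" using Ly[OF k(1)] yz by simp
    thus False using z0 k by simp
  qed
  ultimately show ?thesis by blast
qed

lemma tri: "cmod (a - c) \<le> cmod (a - b) + cmod (b - c)"
  using norm_triangle_ineq[of "a - b" "b - c"] by simp

context lapeig begin

lemma diag_facts:
  assumes lb: "\<And>i l. i < n \<Longrightarrow> l < n \<Longrightarrow> i \<noteq> l \<Longrightarrow> L i l \<ge> - 1 / real n" and i: "i < n"
  shows "(\<Sum>l\<in>{..<n}-{i}. \<bar>L i l\<bar>) = L i i"
    and "(\<Sum>l\<in>{..<n}-{i}. \<bar>L i l + 1 / real n\<bar>) = (1 - 1 / real n) - L i i"
    and "L i i \<le> 1 - 1 / real n" and "L i i \<ge> 0"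
proof -
  have n0: "real n > 0" using i by simp
  have rs: "L i i + (\<Sum>l\<in>{..<n}-{i}. L i l) = 0"
    using rows[OF i] i by (subst (asm) sum.remove[of _ i]) auto
  have "(\<Sum>l\<in>{..<n}-{i}. \<bar>L i l\<bar>) = (\<Sum>l\<in>{..<n}-{i}. - L i l)"
    using offd i by (intro sum.cong refl) auto
  also have "\<dots> = L i i" using rs by (simp add: sum_negf)
  finally show A: "(\<Sum>l\<in>{..<n}-{i}. \<bar>L i l\<bar>) = L i i" .
  have card: "card ({..<n}-{i}) = n - 1" using i by simp
  have "(\<Sum>l\<in>{..<n}-{i}. \<bar>L i l + 1 / real n\<bar>) = (\<Sum>l\<in>{..<n}-{i}. L i l + 1 / real n)"
    using lb i by (intro sum.cong refl) force
  also have "\<dots> = - L i i + real (n - 1) / real n" using rs card by (simp add: sum.distrib)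
  also have "real (n - 1) / real n = 1 - 1 / real n" using i n0 by (simp add: of_nat_diff field_simps)
  finally show "(\<Sum>l\<in>{..<n}-{i}. \<bar>L i l + 1 / real n\<bar>) = (1 - 1 / real n) - L i i" by simp
  have "(\<Sum>l\<in>{..<n}-{i}. \<bar>L i l\<bar>) \<le> (\<Sum>l\<in>{..<n}-{i}. 1 / real n)"
    using lb offd i by (intro sum_mono) force
  also have "\<dots> = real (n - 1) / real n" using card by simp
  also have "\<dots> = 1 - 1 / real n" using i n0 by (simp add: of_nat_diff field_simps)
  finally show "L i i \<le> 1 - 1 / real n" using A by simp
  show "L i i \<ge> 0" using A[symmetric] by (simp add: sum_nonneg)
qed

lemma disk2:
  assumes lb: "\<And>i l. i < n \<Longrightarrow> l < n \<Longrightarrow> i \<noteq> l \<Longrightarrow> L i l \<ge> - 1 / real n"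
  shows "cmod (lam - of_real (1 - 1 / real n)) \<le> 1 - 1 / real n"
proof -
  obtain i where i: "i < n" "cmod (lam - of_real (L i i)) \<le> (\<Sum>l\<in>{..<n}-{i}. \<bar>L i l\<bar>)"
    using gersh[of n L x lam] eig nz by auto
  have "cmod (lam - of_real (1 - 1 / real n)) \<le> cmod (lam - of_real (L i i)) + cmod (of_real (L i i) - of_real (1 - 1 / real n) :: complex)"
    by (rule tri)
  also have "cmod (of_real (L i i) - of_real (1 - 1 / real n) :: complex) = (1 - 1 / real n) - L i i"
    using diag_facts(3)[OF lb i(1)] by (simp flip: of_real_diff)
  finally show ?thesis using i(2) diag_facts(1)[OF lb i(1)] by simp
qed

lemma disk1:
  assumes lb: "\<And>i l. i < n \<Longrightarrow> l < n \<Longrightarrow> i \<noteq> l \<Longrightarrow> L i l \<ge> - 1 / real n" and n2: "n \<ge> 2"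
  shows "cmod (lam - of_real (1 / real n)) \<le> 1 - 1 / real n"
proof -
  have n0: "real n > 0" using n2 by simp
  consider "lam = 0" | "lam = 1" | "lam \<noteq> 0" "lam \<noteq> 1" by blast
  thus ?thesis
  proof cases
    case 1
    have "1 / real n \<le> 1 - 1 / real n" using n2 by (simp add: field_simps)
    moreover have "cmod (lam - of_real (1 / real n)) = \<bar>1 / real n\<bar>"
      using 1 by (simp only: diff_0 norm_minus_cancel norm_of_real)
    ultimately show ?thesis by simp
  next
    case 2
    have "1 / real n \<le> 1" using n2 by simp
    moreover have "(1 - of_real (1 / real n) :: complex) = of_real (1 - 1 / real n)" by simp
    ultimately have "cmod (1 - of_real (1 / real n) :: complex) = 1 - 1 / real n"
      by (simp only: norm_of_real)
    thus ?thesis using 2 by simp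
  next
    case 3
    have cnd: "of_real 1 * lam \<noteq> of_real (1 / real n * real n)" using 3 n0 by simp
    obtain y where y: "\<forall>i<n. (\<Sum>l<n. of_real ((if i = l then 0 else 0) + 1 * L i l + 1 / real n) * y l) = (of_real 0 + of_real 1 * lam) * y i"
      "\<exists>i<n. y i \<noteq> 0"
      using shift_eig[OF rows eig nz 3(1) cnd, of 0] by blast
    have y': "(\<Sum>l<n. of_real (L i l + 1 / real n) * y l) = lam * y i" if "i < n" for i
      using y(1) that by simp
    obtain i where i: "i < n" "cmod (lam - of_real (L i i + 1 / real n)) \<le> (\<Sum>l\<in>{..<n}-{i}. \<bar>L i l + 1 / real n\<bar>)"
      using gersh[of n "\<lambda>i l. L i l + 1 / real n" y lam] y' y(2) by auto
    have "cmod (lam - of_real (1 / real n)) \<le> cmod (lam - of_real (L i i + 1 / real n)) + cmod (of_real (L i i + 1 / real n) - of_real (1 / real n) :: complex)"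
      by (rule tri)
    also have "cmod (of_real (L i i + 1 / real n) - of_real (1 / real n) :: complex) = L i i"
      using diag_facts(4)[OF lb i(1)] by (simp flip: of_real_diff)
    finally show ?thesis using i(2) diag_facts(2)[OF lb i(1)] by simp
  qed
qed

end


lemma cis_half: "cis (pi / 2 - a) = Complex (sin a) (cos a)" "cis (- (pi / 2 - a)) = Complex (sin a) (- cos a)"
  by (simp_all add: complex_eq_iff cos_diff sin_diff)

lemma cs_half: "cos (a - pi / 2) = sin a" "sin (a - pi / 2) = - cos a"
  by (simp_all add: cos_diff sin_diff)

lemma angle0:
  fixes w :: complex
  assumes n2: "n \<ge> 2" and re: "Re w \<ge> 0" and h: "\<bar>Im w\<bar> * sin (pi / n) \<le> cos (pi / n) * Re w"
  shows "\<exists>s t. s \<ge> 0 \<and> t \<ge> 0 \<and> w = of_real s * cis (- (pi / 2 - pi / real n)) + of_real t * cis (pi / 2 - pi / real n)"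
proof -
  define a where "a = pi / real n"
  have n0: "real n > 0" using n2 by simp
  have a0: "0 < a" and a1: "a \<le> pi / 2" using n2 n0 by (auto simp: a_def field_simps)
  have sa: "sin a > 0" using a0 a1 by (intro sin_gt_zero) auto
  have ca: "cos a \<ge> 0" using a0 a1 by (intro cos_ge_zero) auto
  have h': "\<bar>Im w\<bar> * sin a \<le> cos a * Re w" using h by (simp add: a_def)
  show ?thesis
  proof (cases "cos a = 0")
    case True
    hence "\<bar>Im w\<bar> * sin a \<le> 0" using h' by simp
    hence im0: "Im w = 0" using sa by (simp add: mult_le_0_iff)
    define s where "s = Re w / (2 * sin a)"
    have "s \<ge> 0" using re sa by (simp add: s_def)
    moreover have "w = of_real s * cis (- (pi / 2 - a)) + of_real s * cis (pi / 2 - a)"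
      using im0 True sa by (simp add: cis_half cs_half complex_eq_iff s_def)
    ultimately show ?thesis unfolding a_def by blast
  next
    case False
    hence ca': "cos a > 0" using ca by simp
    define s where "s = (Re w / sin a - Im w / cos a) / 2"
    define t where "t = (Re w / sin a + Im w / cos a) / 2"
    have "Im w * sin a \<le> cos a * Re w" using h' by (smt (verit) abs_ge_self mult_right_mono sa)
    hence "Im w / cos a \<le> Re w / sin a" using sa ca' by (simp add: field_simps)
    hence s0: "s \<ge> 0" by (simp add: s_def)
    have "- Im w * sin a \<le> cos a * Re w" using h' by (smt (verit) abs_ge_minus_self mult_right_mono sa)
    hence "- Im w / cos a \<le> Re w / sin a" using sa ca' by (simp add: field_simps)
    hence t0: "t \<ge> 0" by (simp add: t_def)
    have "w = of_real s * cis (- (pi / 2 - a)) + of_real t * cis (pi / 2 - a)"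
      unfolding cis_half using sa ca' by (simp add: complex_eq_iff s_def t_def field_simps)
    with s0 t0 show ?thesis unfolding a_def by blast
  qed
qed

lemma angle0_mem:
  fixes w :: complex
  assumes n2: "n \<ge> 2" and re: "Re w \<ge> 0" and h: "\<bar>Im w\<bar> * sin (pi / n) \<le> cos (pi / n) * Re w"
  shows "w \<in> closed_angle 0 (cis (- (pi / 2 - pi / real n))) (cis (pi / 2 - pi / real n))"
  using angle0[OF assms] unfolding closed_angle_def by auto

lemma one_minus_cis:
  "1 - cis (2 * a) = of_real (2 * sin a) * cis (- (pi / 2 - a))"
  "1 - cis (- (2 * a)) = of_real (2 * sin a) * cis (pi / 2 - a)"
  by (simp_all add: cis_half cs_half complex_eq_iff cos_double_sin sin_double power2_eq_square)

lemma angle1_mem: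
  fixes z :: complex
  assumes n2: "n \<ge> 2" and re: "Re (1 - z) \<ge> 0" and h: "\<bar>Im (1 - z)\<bar> * sin (pi / n) \<le> cos (pi / n) * Re (1 - z)"
  shows "z \<in> closed_angle 1 (cis (- 2 * pi / real n)) (cis (2 * pi / real n))"
proof -
  define a where "a = pi / real n"
  have n0: "real n > 0" using n2 by simp
  have a0: "0 < a" and a1: "a \<le> pi / 2" using n2 n0 by (auto simp: a_def field_simps)
  have sa: "sin a > 0" using a0 a1 by (intro sin_gt_zero) auto
  obtain s t where st: "s \<ge> 0" "t \<ge> 0" "1 - z = of_real s * cis (- (pi / 2 - a)) + of_real t * cis (pi / 2 - a)"
    using angle0[OF n2 re h] unfolding a_def by blast
  have c1: "cis (- (pi / 2 - a)) = (1 - cis (2 * a)) / of_real (2 * sin a)"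
    using one_minus_cis(1)[of a] sa by (simp add: field_simps)
  have c2: "cis (pi / 2 - a) = (1 - cis (- (2 * a))) / of_real (2 * sin a)"
    using one_minus_cis(2)[of a] sa by (simp add: field_simps)
  define S where "S = t / (2 * sin a)"
  define T where "T = s / (2 * sin a)"
  have "z = 1 + of_real S * (cis (- (2 * a)) - 1) + of_real T * (cis (2 * a) - 1)"
  proof -
    have "z = 1 - (of_real s * cis (- (pi / 2 - a)) + of_real t * cis (pi / 2 - a))" using st(3) by (simp add: algebra_simps)
    also have "\<dots> = 1 + of_real S * (cis (- (2 * a)) - 1) + of_real T * (cis (2 * a) - 1)"
      unfolding c1 c2 S_def T_def using sa by (simp add: field_simps)
    finally show ?thesis .
  qed
  moreover have "cis (- 2 * pi / real n) = cis (- (2 * a))" "cis (2 * pi / real n) = cis (2 * a)"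
    by (simp_all add: a_def)
  moreover have "S \<ge> 0" "T \<ge> 0" using st sa by (simp_all add: S_def T_def)
  ultimately show ?thesis unfolding closed_angle_def by auto
qed

lemma sector_gen:
  fixes M :: "nat \<Rightarrow> nat \<Rightarrow> real" and y :: "nat \<Rightarrow> complex"
  assumes "\<And>i. i < n \<Longrightarrow> (\<Sum>l<n. M i l) = 0"
    and "\<And>i l. i < n \<Longrightarrow> l < n \<Longrightarrow> i \<noteq> l \<Longrightarrow> M i l \<le> 0"
    and "\<And>i. i < n \<Longrightarrow> (\<Sum>l<n. of_real (M i l) * y l) = mu * y i"
    and "\<exists>i<n. y i \<noteq> 0" and "n \<ge> 2"
  shows "Re mu \<ge> 0 \<and> \<bar>Im mu\<bar> * sin (pi / n) \<le> cos (pi / n) * Re mu"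
proof -
  interpret lapeig n M y mu using assms by unfold_locales auto
  show ?thesis using Re_nonneg sector[OF assms(5)] by simp
qed

theorem theorem8:
  fixes n :: nat and A :: "real mat" and z :: complex
  assumes "n \<ge> 2"
    and "standardized_laplacian n A"
    and "eigenvalue (map_mat complex_of_real A) z"
  shows "cmod (z - complex_of_real (1 / real n)) \<le> 1 - 1 / real n
       \<and> cmod (z - complex_of_real (1 - 1 / real n)) \<le> 1 - 1 / real n
       \<and> z \<in> closed_angle 1 (cis (- 2 * pi / real n)) (cis (2 * pi / real n))
       \<and> z \<in> closed_angle 0 (cis (- (pi / 2 - pi / real n))) (cis (pi / 2 - pi / real n))
       \<and> \<bar>Im z\<bar> \<le> 1 / (2 * real n) * cot (pi / (2 * real n))"
proof -
  note n2 = assms(1)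
  have Ac: "A \<in> carrier_mat n n" and rows: "\<And>i. i < n \<Longrightarrow> (\<Sum>j<n. A $$ (i, j)) = 0"
    and offd0: "\<And>i j. i < n \<Longrightarrow> j < n \<Longrightarrow> i \<noteq> j \<Longrightarrow> A $$ (i, j) \<le> 0 \<and> \<bar>A $$ (i, j)\<bar> \<le> 1 / real n"
    using assms(2) unfolding standardized_laplacian_def by blast+
  have dr: "dim_row A = n" "dim_col A = n" using Ac by auto
  define M where "M = map_mat complex_of_real A"
  obtain v where v: "v \<in> carrier_vec (dim_row M)" "v \<noteq> 0\<^sub>v (dim_row M)" "M *\<^sub>v v = z \<cdot>\<^sub>v v"
    using assms(3) unfolding eigenvalue_def eigenvector_def M_def by blast
  have dM: "dim_row M = n" "dim_col M = n" using dr by (auto simp: M_def)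
  have dv: "dim_vec v = n" using v(1) dM by auto
  define x where "x i = v $ i" for i
  define L where "L i l = A $$ (i, l)" for i l
  have eig: "(\<Sum>l<n. of_real (L i l) * x l) = z * x i" if i: "i < n" for i
  proof -
    have "(M *\<^sub>v v) $ i = z * x i" using v(3) i dv by (simp add: x_def)
    moreover have "(M *\<^sub>v v) $ i = (\<Sum>l\<in>{0..<n}. M $$ (i, l) * v $ l)"
      using i dM dv by (simp add: scalar_prod_def)
    moreover have "(\<Sum>l\<in>{0..<n}. M $$ (i, l) * v $ l) = (\<Sum>l<n. of_real (L i l) * x l)"
      using i dr by (simp add: M_def L_def x_def atLeast0LessThan)
    ultimately show ?thesis by simp
  qed
  have nz: "\<exists>i<n. x i \<noteq> 0"
  proof (rule ccontr)
    assume "\<not> (\<exists>i<n. x i \<noteq> 0)"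
    hence "v = 0\<^sub>v n" using dv by (auto simp: x_def vec_eq_iff)
    thus False using v(2) dM by simp
  qed
  have rowsL: "\<And>i. i < n \<Longrightarrow> (\<Sum>l<n. L i l) = 0" using rows by (simp add: L_def)
  have offdL: "\<And>i l. i < n \<Longrightarrow> l < n \<Longrightarrow> i \<noteq> l \<Longrightarrow> L i l \<le> 0" using offd0 by (simp add: L_def)
  have lbL: "\<And>i l. i < n \<Longrightarrow> l < n \<Longrightarrow> i \<noteq> l \<Longrightarrow> L i l \<ge> - 1 / real n"
  proof -
    fix i l assume "i < n" "l < n" "i \<noteq> l"
    from offd0[OF this] show "L i l \<ge> - 1 / real n" unfolding L_def by linarith
  qed
  interpret lapeig n L x z using rowsL offdL eig nz by unfold_locales auto
  have D1: "cmod (z - complex_of_real (1 / real n)) \<le> 1 - 1 / real n" by (rule disk1[OF lbL n2])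
  have D2: "cmod (z - complex_of_real (1 - 1 / real n)) \<le> 1 - 1 / real n" by (rule disk2[OF lbL])
  have S0: "z \<in> closed_angle 0 (cis (- (pi / 2 - pi / real n))) (cis (pi / 2 - pi / real n))"
    by (rule angle0_mem[OF n2 Re_nonneg sector[OF n2]])
  have B: "\<bar>Im z\<bar> \<le> 1 / (2 * real n) * cot (pi / (2 * real n))" by (rule band[OF lbL])
  have cpos: "cos (pi / n) \<ge> 0"
  proof -
    have "pi / real n \<le> pi / 2" using n2 by (intro divide_left_mono) auto
    moreover have "pi / real n \<ge> 0" by simp
    ultimately show ?thesis by (intro cos_ge_zero) linarith+
  qed
  have S1: "z \<in> closed_angle 1 (cis (- 2 * pi / real n)) (cis (2 * pi / real n))"
  proof (cases "z = 0 \<or> z = 1")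
    case True
    thus ?thesis using cpos by (intro angle1_mem[OF n2]) auto
  next
    case False
    have cnd: "of_real (-1) * z \<noteq> of_real (- 1 / real n * real n)" using False n2 by simp
    obtain y where y: "\<forall>i<n. (\<Sum>l<n. of_real ((if i = l then 1 else 0) + (-1) * L i l + (- 1 / real n)) * y l)
        = (of_real 1 + of_real (-1) * z) * y i" "\<exists>i<n. y i \<noteq> 0"
      using shift_eig[OF rowsL eig nz _ cnd, of 1] False by blast
    define Mm where "Mm i l = (if i = l then 1 else 0) + (-1) * L i l + (- 1 / real n)" for i l
    have r: "(\<Sum>l<n. Mm i l) = 0" if i: "i < n" for i
    proof -
      have "(\<Sum>l<n. Mm i l) = (\<Sum>l<n. (if i = l then 1 else 0)) - (\<Sum>l<n. L i l) - real n * (1 / real n)"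
        by (simp add: Mm_def sum.distrib sum_subtractf sum_negf)
      also have "\<dots> = 0" using i rowsL[OF i] by simp
      finally show ?thesis .
    qed
    have o: "Mm i l \<le> 0" if "i < n" "l < n" "i \<noteq> l" for i l
      using lbL[OF that] that by (simp add: Mm_def)
    have e: "(\<Sum>l<n. of_real (Mm i l) * y l) = (1 - z) * y i" if "i < n" for i
      using y(1) that by (simp add: Mm_def)
    have "Re (1 - z) \<ge> 0 \<and> \<bar>Im (1 - z)\<bar> * sin (pi / n) \<le> cos (pi / n) * Re (1 - z)"
      by (rule sector_gen[OF r o e y(2) n2])
    thus ?thesis by (intro angle1_mem[OF n2]) auto
  qed
  show ?thesis using D1 D2 S0 S1 B by blast
qed


end
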